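(* Let $I\subseteq\mathbb{R}$ be an open interval (possibly unbounded) and $\Sigma=I\times\mathbb{R}$. (i) If $F\in C^1(\Sigma,\mathbb{R}^2)$ is a non-singular map of the form $F(x,y)=\big(p_0(x),\,q_1(x)y+q_0(x)\big)$ with $p_0,q_0,q_1\in C^1(I,\mathbb{R})$, then $F$ is injective (hence invertible onto its image), and $q_1(x)\neq0$ for all $x\in I$. (ii) If $F(x,y)=\big(p_1(x)y+p_0(x),\,Q(x,y)\big)\in C^1(\Sigma,\mathbb{R}^2)$ is non-singular and $p_1(x)\neq0$ for all $x\in I$, then $F$ is injective. (iii) If $F(x,y)=\big(p_1(x)y+p_0(x),\,Q(x,y)\big)\in C^2(\Sigma,\mathbb{R}^2)$ is non-singular, then $p_1$ has no simple zeroes, i.e. there is no $x_0\in I$ with $p_1(x_0)=0\neq p_1'(x_0)$.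
   Context: For $F=(P,Q)$, $d_F=P_xQ_y-P_yQ_x$ is the Jacobian determinant; $F$ is non-singular if $d_F(x,y)\neq0$ for all $(x,y)\in\Sigma$. *)

theory Defs
  imports "HOL-Analysis.Analysis"
begin

definition C1_on2 :: "(real \<times> real \<Rightarrow> real) \<Rightarrow> (real \<times> real) set \<Rightarrow> bool" where
  "C1_on2 f S \<longleftrightarrow> (\<exists>fx fy. continuous_on S fx \<and> continuous_on S fy \<and>
     (\<forall>z\<in>S. (f has_derivative (\<lambda>h. fx z * fst h + fy z * snd h)) (at z)))"

definition C2_on2 :: "(real \<times> real \<Rightarrow> real) \<Rightarrow> (real \<times> real) set \<Rightarrow> bool" where
  "C2_on2 f S \<longleftrightarrow> (\<exists>fx fy. C1_on2 fx S \<and> C1_on2 fy S \<and>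
     (\<forall>z\<in>S. (f has_derivative (\<lambda>h. fx z * fst h + fy z * snd h)) (at z)))"

definition partial_x :: "(real \<times> real \<Rightarrow> real) \<Rightarrow> real \<times> real \<Rightarrow> real" where
  "partial_x f z = deriv (\<lambda>t. f (t, snd z)) (fst z)"

definition partial_y :: "(real \<times> real \<Rightarrow> real) \<Rightarrow> real \<times> real \<Rightarrow> real" where
  "partial_y f z = deriv (\<lambda>t. f (fst z, t)) (snd z)"

definition jac_det :: "(real \<times> real \<Rightarrow> real) \<Rightarrow> (real \<times> real \<Rightarrow> real) \<Rightarrow> real \<times> real \<Rightarrow> real" where
  "jac_det P Q z = partial_x P z * partial_y Q z - partial_y P z * partial_x Q z"

definition nonsingular :: "(real \<times> real \<Rightarrow> real) \<Rightarrow> (real \<times> real \<Rightarrow> real) \<Rightarrow> (real \<times> real) set \<Rightarrow> bool" where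
  "nonsingular P Q S \<longleftrightarrow> (\<forall>z\<in>S. jac_det P Q z \<noteq> 0)"

end

theory Submission imports Defs begin

lemma partials:
  fixes f :: "real \<times> real \<Rightarrow> real"
  assumes "(f has_derivative (\<lambda>h. a * fst h + b * snd h)) (at (x,y))"
  shows "((\<lambda>t. f (t, y)) has_real_derivative a) (at x)"
    and "((\<lambda>t. f (x, t)) has_real_derivative b) (at y)"
proof -
  have "((\<lambda>t. (t, y)) has_derivative (\<lambda>h. (h, 0))) (at x)"
    by (intro has_derivative_Pair has_derivative_ident has_derivative_const)
  from diff_chain_at[OF this, simplified, OF assms]
  have "((f \<circ> (\<lambda>t. (t,y))) has_derivative ((\<lambda>h. a * fst h + b * snd h) \<circ> (\<lambda>h. (h,0)))) (at x)"
    .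
  then show "((\<lambda>t. f (t, y)) has_real_derivative a) (at x)"
    unfolding has_field_derivative_def by (simp add: o_def)
  have "((\<lambda>t. (x, t)) has_derivative (\<lambda>h. (0, h))) (at y)"
    by (intro has_derivative_Pair has_derivative_ident has_derivative_const)
  from diff_chain_at[OF this, simplified, OF assms]
  have "((f \<circ> (\<lambda>t. (x,t))) has_derivative ((\<lambda>h. a * fst h + b * snd h) \<circ> (\<lambda>h. (0,h)))) (at y)"
    .
  then show "((\<lambda>t. f (x, t)) has_real_derivative b) (at y)"
    unfolding has_field_derivative_def by (simp add: o_def)
qed

lemma rolle_inj:
  fixes g :: "real \<Rightarrow> real"
  assumes I: "is_interval I" and x1: "x1 \<in> I" and x2: "x2 \<in> I"
    and d: "\<And>x. x \<in> I \<Longrightarrow> (g has_real_derivative g' x) (at x)"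
    and nz: "\<And>x. x \<in> I \<Longrightarrow> g' x \<noteq> 0"
    and eq: "g x1 = g x2"
  shows "x1 = x2"
proof -
  have main: "False" if "a < b" "a \<in> I" "b \<in> I" "g a = g b" for a b
  proof -
    have sub: "{a..b} \<subseteq> I"
    proof
      fix x assume "x \<in> {a..b}"
      then show "x \<in> I" using mem_is_interval_1_I[OF I \<open>a \<in> I\<close> \<open>b \<in> I\<close>] by simp
    qed
    have "continuous_on {a..b} g"
    proof (rule continuous_at_imp_continuous_on, rule ballI)
      fix x assume "x \<in> {a..b}"
      then have "x \<in> I" using sub by blast
      show "isCont g x" by (rule DERIV_isCont[OF d[OF \<open>x \<in> I\<close>]])
    qed
    moreover have "g differentiable (at x)" if "a < x" "x < b" for x
    proof -
      have "x \<in> I" using sub that by auto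
      then show ?thesis using d unfolding real_differentiable_def by blast
    qed
    ultimately obtain z where z: "a < z" "z < b" "DERIV g z :> 0"
      using Rolle[of a b g] \<open>a < b\<close> \<open>g a = g b\<close> by blast
    have "z \<in> I" using sub z by auto
    then have "g' z = 0" using d z DERIV_unique by blast
    then show False using nz \<open>z \<in> I\<close> by blast
  qed
  show ?thesis
    using main[of x1 x2] main[of x2 x1] x1 x2 eq by (cases x1 x2 rule: linorder_cases) auto
qed

lemma P_partials:
  fixes p1 p0 :: "real \<Rightarrow> real"
  assumes der: "\<forall>z\<in>I\<times>UNIV. ((\<lambda>z. p1 (fst z) * snd z + p0 (fst z)) has_derivative (\<lambda>h. fx z * fst h + fy z * snd h)) (at z)"
    and x: "x \<in> I"
  shows "(p0 has_real_derivative fx (x,0)) (at x)"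
    and "(p1 has_real_derivative (fx (x,1) - fx (x,0))) (at x)"
    and "partial_x (\<lambda>z. p1 (fst z) * snd z + p0 (fst z)) (x,y) = (fx (x,1) - fx (x,0)) * y + fx (x,0)"
    and "partial_y (\<lambda>z. p1 (fst z) * snd z + p0 (fst z)) (x,y) = p1 x"
proof -
  have a: "((\<lambda>t. p1 t * 0 + p0 t) has_real_derivative fx (x,0)) (at x)"
    using partials(1)[OF der[rule_format, of "(x,0)"]] x by simp
  then show h0: "(p0 has_real_derivative fx (x,0)) (at x)" by simp
  have b: "((\<lambda>t. p1 t * 1 + p0 t) has_real_derivative fx (x,1)) (at x)"
    using partials(1)[OF der[rule_format, of "(x,1)"]] x by simp
  have "((\<lambda>t. (p1 t * 1 + p0 t) - p0 t) has_real_derivative (fx (x,1) - fx (x,0))) (at x)"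
    by (rule DERIV_diff[OF b h0])
  then show h1: "(p1 has_real_derivative (fx (x,1) - fx (x,0))) (at x)" by simp
  have "((\<lambda>t. p1 t * y + p0 t) has_real_derivative ((fx (x,1) - fx (x,0)) * y + fx (x,0))) (at x)"
    using h1 h0 by (intro derivative_eq_intros) auto
  then show "partial_x (\<lambda>z. p1 (fst z) * snd z + p0 (fst z)) (x,y) = (fx (x,1) - fx (x,0)) * y + fx (x,0)"
    unfolding partial_x_def by (simp add: DERIV_imp_deriv)
  have "((\<lambda>t. p1 x * t + p0 x) has_real_derivative p1 x) (at y)"
    by (intro derivative_eq_intros) auto
  then show "partial_y (\<lambda>z. p1 (fst z) * snd z + p0 (fst z)) (x,y) = p1 x"
    unfolding partial_y_def by (simp add: DERIV_imp_deriv)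
qed

theorem lemma3:
  fixes I :: "real set"
  assumes "open I" and "is_interval I"
  shows "(\<forall>p0 q0 q1 :: real \<Rightarrow> real.
           p0 C1_differentiable_on I \<and> q0 C1_differentiable_on I \<and> q1 C1_differentiable_on I \<and>
           C1_on2 (\<lambda>z. p0 (fst z)) (I \<times> UNIV) \<and>
           C1_on2 (\<lambda>z. q1 (fst z) * snd z + q0 (fst z)) (I \<times> UNIV) \<and>
           nonsingular (\<lambda>z. p0 (fst z)) (\<lambda>z. q1 (fst z) * snd z + q0 (fst z)) (I \<times> UNIV)
           \<longrightarrow> inj_on (\<lambda>z. (p0 (fst z), q1 (fst z) * snd z + q0 (fst z))) (I \<times> UNIV)
               \<and> (\<forall>x\<in>I. q1 x \<noteq> 0))
    \<and> (\<forall>(p1 :: real \<Rightarrow> real) (p0 :: real \<Rightarrow> real) (Q :: real \<times> real \<Rightarrow> real).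
           C1_on2 (\<lambda>z. p1 (fst z) * snd z + p0 (fst z)) (I \<times> UNIV) \<and> C1_on2 Q (I \<times> UNIV) \<and>
           nonsingular (\<lambda>z. p1 (fst z) * snd z + p0 (fst z)) Q (I \<times> UNIV) \<and>
           (\<forall>x\<in>I. p1 x \<noteq> 0)
           \<longrightarrow> inj_on (\<lambda>z. (p1 (fst z) * snd z + p0 (fst z), Q z)) (I \<times> UNIV))
    \<and> (\<forall>(p1 :: real \<Rightarrow> real) (p0 :: real \<Rightarrow> real) (Q :: real \<times> real \<Rightarrow> real).
           C2_on2 (\<lambda>z. p1 (fst z) * snd z + p0 (fst z)) (I \<times> UNIV) \<and> C2_on2 Q (I \<times> UNIV) \<and>
           nonsingular (\<lambda>z. p1 (fst z) * snd z + p0 (fst z)) Q (I \<times> UNIV)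
           \<longrightarrow> \<not> (\<exists>x0\<in>I. p1 x0 = 0 \<and> deriv p1 x0 \<noteq> 0))"
proof -
  have i: "\<forall>p0 q0 q1 :: real \<Rightarrow> real.
           p0 C1_differentiable_on I \<and> q0 C1_differentiable_on I \<and> q1 C1_differentiable_on I \<and>
           C1_on2 (\<lambda>z. p0 (fst z)) (I \<times> UNIV) \<and>
           C1_on2 (\<lambda>z. q1 (fst z) * snd z + q0 (fst z)) (I \<times> UNIV) \<and>
           nonsingular (\<lambda>z. p0 (fst z)) (\<lambda>z. q1 (fst z) * snd z + q0 (fst z)) (I \<times> UNIV)
           \<longrightarrow> inj_on (\<lambda>z. (p0 (fst z), q1 (fst z) * snd z + q0 (fst z))) (I \<times> UNIV)
               \<and> (\<forall>x\<in>I. q1 x \<noteq> 0)"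
  proof (intro allI impI conjI)
  fix p0 q0 q1 :: "real \<Rightarrow> real"
  assume H: "p0 C1_differentiable_on I \<and> q0 C1_differentiable_on I \<and> q1 C1_differentiable_on I \<and>
           C1_on2 (\<lambda>z. p0 (fst z)) (I \<times> UNIV) \<and>
           C1_on2 (\<lambda>z. q1 (fst z) * snd z + q0 (fst z)) (I \<times> UNIV) \<and>
           nonsingular (\<lambda>z. p0 (fst z)) (\<lambda>z. q1 (fst z) * snd z + q0 (fst z)) (I \<times> UNIV)"
  obtain D0 where D0: "\<And>x. x \<in> I \<Longrightarrow> (p0 has_real_derivative D0 x) (at x)"
  proof -
    have "p0 C1_differentiable_on I" using H by (rule conjunct1)
    then show ?thesis using that
      unfolding C1_differentiable_on_def has_real_derivative_iff_has_vector_derivative by blast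
  qed
  have J: "D0 x * q1 x \<noteq> 0" if x: "x \<in> I" for x
  proof -
    have "partial_x (\<lambda>z. p0 (fst z)) (x,0) = D0 x"
      unfolding partial_x_def using D0[OF x] by (simp add: DERIV_imp_deriv)
    moreover have "partial_y (\<lambda>z. p0 (fst z)) (x,0) = 0"
      unfolding partial_y_def by simp
    moreover have "((\<lambda>t. q1 x * t + q0 x) has_real_derivative q1 x) (at 0)"
      by (intro derivative_eq_intros) auto
    then have "partial_y (\<lambda>z. q1 (fst z) * snd z + q0 (fst z)) (x,0) = q1 x"
      unfolding partial_y_def by (simp add: DERIV_imp_deriv)
    moreover have "jac_det (\<lambda>z. p0 (fst z)) (\<lambda>z. q1 (fst z) * snd z + q0 (fst z)) (x,0) \<noteq> 0"
      using H x unfolding nonsingular_def by auto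
    ultimately show ?thesis unfolding jac_det_def by simp
  qed
  show "\<forall>x\<in>I. q1 x \<noteq> 0" using J by auto
  show "inj_on (\<lambda>z. (p0 (fst z), q1 (fst z) * snd z + q0 (fst z))) (I \<times> UNIV)"
  proof (rule inj_onI)
    fix a b assume "a \<in> I \<times> UNIV" "b \<in> I \<times> UNIV"
      and e: "(\<lambda>z. (p0 (fst z), q1 (fst z) * snd z + q0 (fst z))) a = (\<lambda>z. (p0 (fst z), q1 (fst z) * snd z + q0 (fst z))) b"
    then obtain x1 y1 x2 y2 where ab: "a = (x1,y1)" "b = (x2,y2)" and x1: "x1 \<in> I" and x2: "x2 \<in> I"
      by (cases a, cases b) auto
    have e1: "p0 x1 = p0 x2" and e2: "q1 x1 * y1 + q0 x1 = q1 x2 * y2 + q0 x2"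
      using e unfolding ab by simp_all
    have "x1 = x2"
      by (rule rolle_inj[OF assms(2) x1 x2 D0 _ e1]) (use J in auto)
    moreover then have "y1 = y2" using e2 J[OF x1] by simp
    ultimately show "a = b" unfolding ab by simp
  qed
  qed
  have ii: "\<forall>(p1 :: real \<Rightarrow> real) (p0 :: real \<Rightarrow> real) (Q :: real \<times> real \<Rightarrow> real).
           C1_on2 (\<lambda>z. p1 (fst z) * snd z + p0 (fst z)) (I \<times> UNIV) \<and> C1_on2 Q (I \<times> UNIV) \<and>
           nonsingular (\<lambda>z. p1 (fst z) * snd z + p0 (fst z)) Q (I \<times> UNIV) \<and>
           (\<forall>x\<in>I. p1 x \<noteq> 0)
           \<longrightarrow> inj_on (\<lambda>z. (p1 (fst z) * snd z + p0 (fst z), Q z)) (I \<times> UNIV)"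
  proof (intro allI impI)

  fix p1 p0 :: "real \<Rightarrow> real" and Q :: "real \<times> real \<Rightarrow> real"
  assume H: "C1_on2 (\<lambda>z. p1 (fst z) * snd z + p0 (fst z)) (I \<times> UNIV) \<and> C1_on2 Q (I \<times> UNIV) \<and>
           nonsingular (\<lambda>z. p1 (fst z) * snd z + p0 (fst z)) Q (I \<times> UNIV) \<and>
           (\<forall>x\<in>I. p1 x \<noteq> 0)"
  obtain fx fy where fder: "\<forall>z\<in>I\<times>UNIV. ((\<lambda>z. p1 (fst z) * snd z + p0 (fst z)) has_derivative (\<lambda>h. fx z * fst h + fy z * snd h)) (at z)"
    using H unfolding C1_on2_def by blast
  obtain gx gy where gder: "\<forall>z\<in>I\<times>UNIV. (Q has_derivative (\<lambda>h. gx z * fst h + gy z * snd h)) (at z)"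
    using H unfolding C1_on2_def by blast
  define d0 where "d0 x = fx (x,0)" for x
  define d1 where "d1 x = fx (x,1) - fx (x,0)" for x
  have p1nz: "p1 x \<noteq> 0" if "x \<in> I" for x using H that by auto
  have J: "(d1 x * y + d0 x) * gy (x,y) - p1 x * gx (x,y) \<noteq> 0" if x: "x \<in> I" for x y
  proof -
    have "partial_x Q (x,y) = gx (x,y)" "partial_y Q (x,y) = gy (x,y)"
      using partials[OF gder[rule_format, of "(x,y)"]] x
      unfolding partial_x_def partial_y_def by (auto simp: DERIV_imp_deriv)
    moreover have "jac_det (\<lambda>z. p1 (fst z) * snd z + p0 (fst z)) Q (x,y) \<noteq> 0"
      using H x unfolding nonsingular_def by auto
    ultimately show ?thesis
      unfolding jac_det_def d0_def d1_def using P_partials(3,4)[OF fder x] by simp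
  qed
  show "inj_on (\<lambda>z. (p1 (fst z) * snd z + p0 (fst z), Q z)) (I \<times> UNIV)"
  proof (rule inj_onI)
    fix a b assume "a \<in> I \<times> UNIV" "b \<in> I \<times> UNIV"
      and e: "(\<lambda>z. (p1 (fst z) * snd z + p0 (fst z), Q z)) a = (\<lambda>z. (p1 (fst z) * snd z + p0 (fst z), Q z)) b"
    then obtain x1 y1 x2 y2 where ab: "a = (x1,y1)" "b = (x2,y2)" and x1: "x1 \<in> I" and x2: "x2 \<in> I"
      by (cases a, cases b) auto
    have e1: "p1 x1 * y1 + p0 x1 = p1 x2 * y2 + p0 x2" and e2: "Q (x1, y1) = Q (x2, y2)"
      using e unfolding ab by simp_all
    define c where "c = p1 x1 * y1 + p0 x1"
    define yc where "yc t = (c - p0 t) / p1 t" for t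
    define g where "g t = Q (t, yc t)" for t
    define g' where "g' t = gx (t, yc t) + gy (t, yc t) * (-(d1 t * yc t + d0 t) / p1 t)" for t
    have gd: "(g has_real_derivative g' t) (at t)" if t: "t \<in> I" for t
    proof -
      have h0: "(p0 has_real_derivative d0 t) (at t)" and h1: "(p1 has_real_derivative d1 t) (at t)"
        using P_partials(1,2)[OF fder t] unfolding d0_def d1_def by auto
      have yd: "(yc has_real_derivative (-(d1 t * yc t + d0 t) / p1 t)) (at t)"
      proof -
        have "((\<lambda>t. (c - p0 t) / p1 t) has_real_derivative
               ((0 - d0 t) * p1 t - (c - p0 t) * d1 t) / (p1 t * p1 t)) (at t)"
          by (intro DERIV_divide DERIV_diff DERIV_const h0 h1 p1nz t)
        moreover have "((0 - d0 t) * p1 t - (c - p0 t) * d1 t) / (p1 t * p1 t) = -(d1 t * yc t + d0 t) / p1 t"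
          using p1nz[OF t] unfolding yc_def by (simp add: field_simps)
        ultimately show ?thesis unfolding yc_def[abs_def] by simp
      qed
      have "((\<lambda>s. (s, yc s)) has_derivative (\<lambda>h. (h, (-(d1 t * yc t + d0 t) / p1 t) * h))) (at t)"
      proof -
        define D where "D = (-(d1 t * yc t + d0 t) / p1 t)"
        have "(yc has_derivative (\<lambda>h. D * h)) (at t)"
          using yd unfolding has_field_derivative_def D_def .
        then have "((\<lambda>s. (s, yc s)) has_derivative (\<lambda>h. (h, D * h))) (at t)"
          by (intro has_derivative_Pair has_derivative_ident)
        then show ?thesis unfolding D_def .
      qed
      from diff_chain_at[OF this, simplified, OF gder[rule_format, of "(t, yc t)"]]
      have "((Q \<circ> (\<lambda>s. (s, yc s))) has_derivative
              ((\<lambda>h. gx (t, yc t) * fst h + gy (t, yc t) * snd h) \<circ> (\<lambda>h. (h, (-(d1 t * yc t + d0 t) / p1 t) * h)))) (at t)"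
        using t by simp
      then show ?thesis unfolding has_field_derivative_def g_def[abs_def] g'_def o_def
        by (rule has_derivative_eq_rhs) (auto simp: algebra_simps)
    qed
    have gnz: "g' t \<noteq> 0" if t: "t \<in> I" for t
    proof -
      have "g' t * p1 t = -((d1 t * yc t + d0 t) * gy (t, yc t) - p1 t * gx (t, yc t))"
        using p1nz[OF t] unfolding g'_def by (simp add: field_simps)
      then show ?thesis using J[OF t, of "yc t"] by auto
    qed
    have y1: "yc x1 = y1" using p1nz[OF x1] unfolding yc_def c_def by (simp add: field_simps)
    have y2: "yc x2 = y2" using p1nz[OF x2] e1 unfolding yc_def c_def by (simp add: field_simps)
    have "g x1 = g x2" unfolding g_def y1 y2 by (rule e2)
    have "x1 = x2"
      by (rule rolle_inj[OF assms(2) x1 x2 gd gnz \<open>g x1 = g x2\<close>])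
    moreover then have "y1 = y2" using e1 p1nz[OF x1] by simp
    ultimately show "a = b" unfolding ab by simp
  qed
  qed
  have iii: "\<forall>(p1 :: real \<Rightarrow> real) (p0 :: real \<Rightarrow> real) (Q :: real \<times> real \<Rightarrow> real).
           C2_on2 (\<lambda>z. p1 (fst z) * snd z + p0 (fst z)) (I \<times> UNIV) \<and> C2_on2 Q (I \<times> UNIV) \<and>
           nonsingular (\<lambda>z. p1 (fst z) * snd z + p0 (fst z)) Q (I \<times> UNIV)
           \<longrightarrow> \<not> (\<exists>x0\<in>I. p1 x0 = 0 \<and> deriv p1 x0 \<noteq> 0)"
  proof (intro allI impI)

  fix p1 p0 :: "real \<Rightarrow> real" and Q :: "real \<times> real \<Rightarrow> real"
  assume H: "C2_on2 (\<lambda>z. p1 (fst z) * snd z + p0 (fst z)) (I \<times> UNIV) \<and> C2_on2 Q (I \<times> UNIV) \<and>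
           nonsingular (\<lambda>z. p1 (fst z) * snd z + p0 (fst z)) Q (I \<times> UNIV)"
  show "\<not> (\<exists>x0\<in>I. p1 x0 = 0 \<and> deriv p1 x0 \<noteq> 0)"
  proof
    assume "\<exists>x0\<in>I. p1 x0 = 0 \<and> deriv p1 x0 \<noteq> 0"
    then obtain x0 where x0: "x0 \<in> I" "p1 x0 = 0" "deriv p1 x0 \<noteq> 0" by blast
    obtain fx fy where fder: "\<forall>z\<in>I\<times>UNIV. ((\<lambda>z. p1 (fst z) * snd z + p0 (fst z)) has_derivative (\<lambda>h. fx z * fst h + fy z * snd h)) (at z)"
      using H unfolding C2_on2_def by blast
    define d0 where "d0 = fx (x0,0)"
    define d1 where "d1 = fx (x0,1) - fx (x0,0)"
    have "deriv p1 x0 = d1" using P_partials(2)[OF fder x0(1)] unfolding d1_def by (simp add: DERIV_imp_deriv)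
    then have d1nz: "d1 \<noteq> 0" using x0 by simp
    define ys where "ys = - d0 / d1"
    have "partial_x (\<lambda>z. p1 (fst z) * snd z + p0 (fst z)) (x0,ys) = 0"
      using P_partials(3)[OF fder x0(1), of ys] d1nz unfolding ys_def d0_def d1_def by (simp add: field_simps)
    moreover have "partial_y (\<lambda>z. p1 (fst z) * snd z + p0 (fst z)) (x0,ys) = 0"
      using P_partials(4)[OF fder x0(1), of ys] x0 by simp
    moreover have "jac_det (\<lambda>z. p1 (fst z) * snd z + p0 (fst z)) Q (x0,ys) \<noteq> 0"
      using H x0 unfolding nonsingular_def by auto
    ultimately show False unfolding jac_det_def by simp
  qed
  qed
  show ?thesis using i ii iii by (intro conjI)
qed

end
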